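(* Let $F$ be an infinite field, $n>1$ an integer, and $p\in F[x]$ a nonconstant polynomial. Then every noncentral matrix in $\mathrm{M}_n(F)$ with trace zero belongs to $p[\mathrm{M}_n(F),\mathrm{M}_n(F)]=\{p(AB)-p(BA)\mid A,B\in\mathrm{M}_n(F)\}$. Moreover, if $F$ has characteristic zero, then $$p[\mathrm{M}_n(F),\mathrm{M}_n(F)]=\{A\in\mathrm{M}_n(F)\mid \mathrm{trace}(A)=0\}.$$ *)

theory Defs
  imports "HOL-Analysis.Analysis" "HOL-Computational_Algebra.Polynomial"
begin

primrec matpow :: "'a::semiring_1^'n^'n \<Rightarrow> nat \<Rightarrow> 'a^'n^'n" where
  "matpow A 0 = mat 1"
| "matpow A (Suc k) = A ** matpow A k"

definition poly_mat :: "'a::comm_ring_1 poly \<Rightarrow> 'a^'n^'n \<Rightarrow> 'a^'n^'n" where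
  "poly_mat p A = (\<Sum>i\<le>degree p. mat (coeff p i) ** matpow A i)"

definition central_mat :: "'a::semiring_1^'n^'n \<Rightarrow> bool" where
  "central_mat A \<longleftrightarrow> (\<forall>B. A ** B = B ** A)"

definition poly_commutator_image :: "'a::comm_ring_1 poly \<Rightarrow> ('a^'n^'n) set" where
  "poly_commutator_image p = {poly_mat p (A ** B) - poly_mat p (B ** A) | A B. True}"

end

theory Submission
  imports Defs
begin

definition dmat :: "('n \<Rightarrow> 'a::semiring_1) \<Rightarrow> 'a^'n^'n" where
  "dmat t = (\<chi> i j. if i = j then t i else 0)"

definition rk1 :: "('n \<Rightarrow> 'a::semiring_1) \<Rightarrow> ('n \<Rightarrow> 'a) \<Rightarrow> 'a^'n^'n" where
  "rk1 v w = (\<chi> i j. v i * w j)"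

definition simi :: "'a::semiring_1^'n^'n \<Rightarrow> 'a^'n^'n \<Rightarrow> bool" where
  "simi B B' \<longleftrightarrow> (\<exists>P Q. P ** Q = mat 1 \<and> Q ** P = mat 1 \<and> B' = P ** B ** Q)"

lemma simi_refl: "simi B B"
  unfolding simi_def by (rule exI[of _ "mat 1"], rule exI[of _ "mat 1"]) simp

lemma simi_sym: "simi B B' \<Longrightarrow> simi B' B"
  unfolding simi_def
proof (elim exE conjE)
  fix P Q assume h: "P ** Q = mat 1" "Q ** P = mat 1" "B' = P ** B ** Q"
  have "Q ** B' ** P = (Q ** P) ** B ** (Q ** P)" using h(3) by (simp add: matrix_mul_assoc)
  then have "B = Q ** B' ** P" using h by simp
  then show "\<exists>P Q. P ** Q = mat 1 \<and> Q ** P = mat 1 \<and> B = P ** B' ** Q" using h by blast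
qed

lemma simi_trans: "simi B B' \<Longrightarrow> simi B' B'' \<Longrightarrow> simi B B''"
  unfolding simi_def
proof (elim exE conjE)
  fix P Q P' Q' assume h: "P ** Q = mat 1" "Q ** P = mat 1" "B' = P ** B ** Q"
    and h': "P' ** Q' = mat 1" "Q' ** P' = mat 1" "B'' = P' ** B' ** Q'"
  have "(P' ** P) ** (Q ** Q') = P' ** (P ** Q) ** Q'" by (simp add: matrix_mul_assoc)
  also have "\<dots> = mat 1" using h h' by simp
  finally have 1: "(P' ** P) ** (Q ** Q') = mat 1" .
  have "(Q ** Q') ** (P' ** P) = Q ** (Q' ** P') ** P" by (simp add: matrix_mul_assoc)
  also have "\<dots> = mat 1" using h h' by simp
  finally have 2: "(Q ** Q') ** (P' ** P) = mat 1" .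
  have 3: "B'' = (P' ** P) ** B ** (Q ** Q')" using h(3) h'(3) by (simp add: matrix_mul_assoc)
  show "\<exists>P Q. P ** Q = mat 1 \<and> Q ** P = mat 1 \<and> B'' = P ** B ** Q" using 1 2 3 by blast
qed

lemma matrix_add_rdistrib: "((B + C) ** (A::'a::semiring_1^'n^'n)) = (B ** A) + (C ** A)"
  by (vector matrix_matrix_mult_def sum.distrib[symmetric] field_simps)
lemma matrix_sub_ldistrib: "((A::'a::ring_1^'n^'n) ** (B - C)) = (A ** B) - (A ** C)"
  by (vector matrix_matrix_mult_def sum_subtractf[symmetric] field_simps)
lemma matrix_sub_rdistrib: "((B - C) ** (A::'a::ring_1^'n^'n)) = (B ** A) - (C ** A)"
  by (vector matrix_matrix_mult_def sum_subtractf[symmetric] field_simps)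

lemma rk1_left: "((mat 1 + rk1 v w) ** (B::'a::comm_ring_1^'n^'n))$i$l = B$i$l + v i * (\<Sum>k\<in>UNIV. w k * B$k$l)"
proof -
  have "((mat 1 + rk1 v w) ** B)$i$l = (\<Sum>k\<in>UNIV. (if i = k then B$k$l else 0) + v i * (w k * B$k$l))"
    unfolding matrix_matrix_mult_def vec_lambda_beta by (rule sum.cong) (auto simp: mat_def rk1_def algebra_simps)
  also have "\<dots> = B$i$l + v i * (\<Sum>k\<in>UNIV. w k * B$k$l)"
    by (simp add: sum.distrib sum_distrib_left)
  finally show ?thesis .
qed

lemma rk1_right: "((M::'a::comm_ring_1^'n^'n) ** (mat 1 - rk1 v w))$i$j = M$i$j - (\<Sum>l\<in>UNIV. M$i$l * v l) * w j"
proof -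
  have "(M ** (mat 1 - rk1 v w))$i$j = (\<Sum>l\<in>UNIV. (if l = j then M$i$l else 0) - M$i$l * v l * w j)"
    unfolding matrix_matrix_mult_def vec_lambda_beta by (rule sum.cong) (auto simp: mat_def rk1_def algebra_simps)
  also have "\<dots> = M$i$j - (\<Sum>l\<in>UNIV. M$i$l * v l) * w j"
    by (simp add: sum_subtractf sum_distrib_right)
  finally show ?thesis .
qed

lemma rk1_conj: "((mat 1 + rk1 v w) ** (B::'a::comm_ring_1^'n^'n) ** (mat 1 - rk1 v w))$i$j
   = B$i$j + v i * (\<Sum>k\<in>UNIV. w k * B$k$j) - (\<Sum>l\<in>UNIV. B$i$l * v l) * w j
     - v i * (\<Sum>l\<in>UNIV. (\<Sum>k\<in>UNIV. w k * B$k$l) * v l) * w j"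
  by (simp add: rk1_right rk1_left distrib_right sum.distrib sum_distrib_left mult.assoc algebra_simps)

lemma rk1_inv:
  assumes "(\<Sum>k\<in>UNIV. w k * v k) = (0::'a::comm_ring_1)"
  shows "(mat 1 + rk1 v w) ** (mat 1 - rk1 v w) = mat 1" "(mat 1 - rk1 v w) ** (mat 1 + rk1 v w) = mat 1"
proof -
  have e: "rk1 v w ** rk1 v w = 0"
  proof -
    have "(rk1 v w ** rk1 v w)$i$j = 0" for i j
    proof -
      have "(rk1 v w ** rk1 v w)$i$j = (\<Sum>k\<in>UNIV. v i * w k * (v k * w j))"
        by (simp add: matrix_matrix_mult_def rk1_def)
      also have "\<dots> = v i * (\<Sum>k\<in>UNIV. w k * v k) * w j"
        by (simp add: sum_distrib_left sum_distrib_right algebra_simps)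
      finally show ?thesis using assms by simp
    qed
    then show ?thesis by (simp add: vec_eq_iff)
  qed
  have d1: "(mat 1 + R) ** (mat 1 - R) = mat 1 - R ** R" for R :: "'a^'n^'n"
    by (simp add: matrix_add_ldistrib matrix_add_rdistrib matrix_sub_ldistrib matrix_sub_rdistrib)
  have d2: "(mat 1 - R) ** (mat 1 + R) = mat 1 - R ** R" for R :: "'a^'n^'n"
    by (simp add: matrix_add_ldistrib matrix_add_rdistrib matrix_sub_ldistrib matrix_sub_rdistrib)
  show "(mat 1 + rk1 v w) ** (mat 1 - rk1 v w) = mat 1" using d1[of "rk1 v w"] e by simp
  show "(mat 1 - rk1 v w) ** (mat 1 + rk1 v w) = mat 1" using d2[of "rk1 v w"] e by simp
qed

lemma simi_rk1:
  assumes "(\<Sum>k\<in>UNIV. w k * v k) = (0::'a::comm_ring_1)"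
  shows "simi B ((mat 1 + rk1 v w) ** (B::'a^'n^'n) ** (mat 1 - rk1 v w))"
  unfolding simi_def using rk1_inv[OF assms] by blast

lemma sum_if_r: "(\<Sum>l\<in>(UNIV::'n::finite set). f l * (if l = a then c else 0)) = f a * (c::'a::semiring_1)"
proof -
  have "(\<Sum>l\<in>(UNIV::'n set). f l * (if l = a then c else 0)) = (\<Sum>l\<in>(UNIV::'n set). if l = a then f a * c else 0)"
    by (rule sum.cong) auto
  then show ?thesis by simp
qed

lemma sum_if_l: "(\<Sum>l\<in>(UNIV::'n::finite set). (if l = a then c else 0) * f l) = c * (f a::'a::semiring_1)"
proof -
  have "(\<Sum>l\<in>(UNIV::'n set). (if l = a then c else 0) * f l) = (\<Sum>l\<in>(UNIV::'n set). if l = a then c * f a else 0)"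
    by (rule sum.cong) auto
  then show ?thesis by simp
qed

definition cnj :: "('n \<Rightarrow> 'a::comm_ring_1) \<Rightarrow> ('n \<Rightarrow> 'a) \<Rightarrow> 'a^'n^'n \<Rightarrow> 'a^'n^'n" where
  "cnj v w B = (mat 1 + rk1 v w) ** B ** (mat 1 - rk1 v w)"

lemma tv_entry:
  assumes "x \<noteq> y"
  shows "(cnj (\<lambda>k. if k = x then c else 0) (\<lambda>k. if k = y then 1 else 0) (B::'a::comm_ring_1^'n^'n))$i$j
    = B$i$j + (if i = x then c * B$y$j else 0) - (if j = y then B$i$x * c else 0)
      - (if i = x \<and> j = y then c * c * B$y$x else 0)"
proof -
  show ?thesis unfolding cnj_def rk1_conj sum_if_l sum_if_r using assms by auto
qed

lemma simi_tv:
  assumes "x \<noteq> y"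
  shows "simi B (cnj (\<lambda>k. if k = x then c else 0) (\<lambda>k. if k = y then (1::'a::comm_ring_1) else 0) B)"
  unfolding cnj_def by (rule simi_rk1) (use assms in \<open>simp add: sum_if_l sum_if_r\<close>)

lemma ea_entry:
  assumes "z a = 0"
  shows "(cnj (\<lambda>k. if k = a then 1 else 0) z (B::'a::comm_ring_1^'n^'n))$i$j
    = B$i$j + (if i = a then (\<Sum>k\<in>UNIV. z k * B$k$j) - (\<Sum>k\<in>UNIV. z k * B$k$a) * z j else 0) - B$i$a * z j"
proof -
  show ?thesis unfolding cnj_def rk1_conj sum_if_l sum_if_r using assms by auto
qed

lemma simi_ea:
  assumes "z a = 0"
  shows "simi B (cnj (\<lambda>k. if k = a then 1 else 0) z (B::'a::comm_ring_1^'n^'n))"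
  unfolding cnj_def by (rule simi_rk1) (use assms in \<open>simp add: sum_if_l sum_if_r\<close>)

definition scalar_on :: "'n set \<Rightarrow> 'a::zero^'n^'n \<Rightarrow> bool" where
  "scalar_on J B \<longleftrightarrow> (\<exists>c. \<forall>i\<in>J. \<forall>j\<in>J. B$i$j = (if i = j then c else 0))"

lemma simi_trace: "simi B B' \<Longrightarrow> trace B' = trace (B::'a::comm_ring_1^'n^'n)"
  unfolding simi_def
proof (elim exE conjE)
  fix P Q assume h: "P ** Q = mat 1" "Q ** P = mat 1" "B' = P ** B ** Q"
  have "trace B' = trace (Q ** (P ** B))" using h(3) trace_mul_sym by metis
  also have "\<dots> = trace B" using h(2) by (simp add: matrix_mul_assoc)
  finally show ?thesis .
qed

lemma sum_two_deltas:
  assumes "b \<noteq> b'"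
  shows "(\<Sum>k\<in>(UNIV::'n::finite set). (if k = b then x else if k = b' then y else 0) * g k) = x * g b + y * (g b'::'a::semiring_1)"
proof -
  have "(\<Sum>k\<in>(UNIV::'n set). (if k = b then x else if k = b' then y else 0) * g k)
      = (\<Sum>k\<in>(UNIV::'n set). (if k = b then x * g b else 0) + (if k = b' then y * g b' else 0))"
    by (rule sum.cong) (use assms in auto)
  also have "\<dots> = x * g b + y * g b'" by (simp add: sum.distrib)
  finally show ?thesis .
qed

lemma SL1:
  fixes B :: "'a::field^'n^'n"
  assumes inf: "infinite (UNIV::'a set)" and a: "a \<in> J" and ns: "\<not> scalar_on J B"
  shows "\<exists>B0. simi B B0 \<and> (\<forall>i. i \<notin> J \<longrightarrow> B0$i$i = B$i$i) \<and> (\<exists>b\<in>J. b \<noteq> a \<and> B0$b$a \<noteq> 0)"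
proof (cases "\<exists>b\<in>J. b \<noteq> a \<and> B$b$a \<noteq> 0")
  case True
  then show ?thesis using simi_refl by blast
next
  case F1: False
  show ?thesis
  proof (cases "\<exists>j\<in>J. j \<noteq> a \<and> (B$a$j \<noteq> 0 \<or> B$j$j \<noteq> B$a$a)")
    case True
    then obtain j where j: "j \<in> J" "j \<noteq> a" "B$a$j \<noteq> 0 \<or> B$j$j \<noteq> B$a$a" by blast
    define r where "r = (B$a$a - B$j$j) / B$a$j"
    obtain c where c: "c \<notin> {0, r}" using ex_new_if_finite[OF inf, of "{0,r}"] by auto
    define B0 where "B0 = cnj (\<lambda>k. if k = j then c else 0) (\<lambda>k. if k = a then 1 else 0) B"
    have ja: "B$j$a = 0" using F1 j by auto
    have "B0$j$a = c * B$a$a - B$j$j * c - c * c * B$a$j"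
      unfolding B0_def tv_entry[OF j(2)] using ja j by auto
    also have "\<dots> = c * (B$a$a - B$j$j - c * B$a$j)" by (simp add: algebra_simps)
    finally have e: "B0$j$a = c * (B$a$a - B$j$j - c * B$a$j)" .
    have "B$a$a - B$j$j - c * B$a$j \<noteq> 0"
    proof (cases "B$a$j = 0")
      case True
      then show ?thesis using j(3) by auto
    next
      case False
      show ?thesis
      proof
        assume "B$a$a - B$j$j - c * B$a$j = 0"
        then have "c = r" unfolding r_def using False by (simp add: field_simps)
        then show False using c by auto
      qed
    qed
    then have "B0$j$a \<noteq> 0" using e c by auto
    moreover have "simi B B0" unfolding B0_def by (rule simi_tv[OF j(2)])
    moreover have "\<forall>i. i \<notin> J \<longrightarrow> B0$i$i = B$i$i"
    proof (intro allI impI)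
      fix i assume "i \<notin> J"
      then have "i \<noteq> j" "i \<noteq> a" using a j by auto
      then show "B0$i$i = B$i$i" unfolding B0_def tv_entry[OF j(2)] by auto
    qed
    ultimately show ?thesis using j by blast
  next
    case F2: False
    have "\<exists>i\<in>J. \<exists>j\<in>J. i \<noteq> j \<and> B$i$j \<noteq> 0"
    proof (rule ccontr)
      assume na: "\<not> (\<exists>i\<in>J. \<exists>j\<in>J. i \<noteq> j \<and> B$i$j \<noteq> 0)"
      have "scalar_on J B" unfolding scalar_on_def
      proof (rule exI[of _ "B$a$a"], intro ballI)
        fix i j assume "i \<in> J" "j \<in> J"
        then show "B$i$j = (if i = j then B$a$a else 0)" using na F2 by (cases "i = a") auto
      qed
      then show False using ns by auto
    qed
    then obtain i j where ij: "i \<in> J" "j \<in> J" "i \<noteq> j" "B$i$j \<noteq> 0" by blast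
    have ia: "i \<noteq> a" using F2 ij by auto
    have ja: "j \<noteq> a" using F1 ij by auto
    define B0 where "B0 = cnj (\<lambda>k. if k = j then 1 else 0) (\<lambda>k. if k = a then 1 else 0) B"
    have "B0$i$a = B$i$a - B$i$j" unfolding B0_def tv_entry[OF ja] using ij by auto
    then have "B0$i$a \<noteq> 0" using F1 ij ia by auto
    moreover have "simi B B0" unfolding B0_def by (rule simi_tv[OF ja])
    moreover have "\<forall>i. i \<notin> J \<longrightarrow> B0$i$i = B$i$i"
    proof (intro allI impI)
      fix k assume "k \<notin> J"
      then have "k \<noteq> j" "k \<noteq> a" using a ij by auto
      then show "B0$k$k = B$k$k" unfolding B0_def tv_entry[OF ja] by auto
    qed
    ultimately show ?thesis using ij ia by blast
  qed
qed

lemma SL2: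
  fixes B :: "'a::field^'n^'n"
  assumes a: "a \<in> J" and b: "b \<in> J" "b \<noteq> a" "B$b$a \<noteq> 0"
  shows "\<exists>B1. simi B B1 \<and> B1$a$a = 0 \<and> (\<forall>i. i \<notin> J \<longrightarrow> B1$i$i = B$i$i)
     \<and> (2 \<le> card (J - {a}) \<longrightarrow> \<not> scalar_on (J - {a}) B1)"
proof (cases "\<exists>b'\<in>J. b' \<noteq> a \<and> b' \<noteq> b")
  case True
  then obtain b' where b': "b' \<in> J" "b' \<noteq> a" "b' \<noteq> b" by blast
  define t where "t = (B$b$b' - 1) / B$b$a"
  define al where "al = (- B$a$a - t * B$b'$a) / B$b$a"
  define z where "z = (\<lambda>k. if k = b then al else if k = b' then t else 0)"
  have za: "z a = 0" unfolding z_def using b b' by auto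
  define B1 where "B1 = cnj (\<lambda>k. if k = a then 1 else 0) z B"
  have S: "(\<Sum>k\<in>UNIV. z k * B$k$a) = al * B$b$a + t * B$b'$a"
    unfolding z_def using sum_two_deltas[of b b' al t "\<lambda>k. B$k$a"] b' by simp
  have "B1$a$a = B$a$a + (\<Sum>k\<in>UNIV. z k * B$k$a)"
    unfolding B1_def ea_entry[of z a, OF za] using za by simp
  also have "\<dots> = 0" unfolding S al_def using b by (simp add: field_simps)
  finally have 1: "B1$a$a = 0" .
  have "B1$b$b' = B$b$b' - B$b$a * t" unfolding B1_def ea_entry[of z a, OF za] using b b' by (simp add: z_def)
  also have "\<dots> = 1" unfolding t_def using b by (simp add: field_simps)
  finally have 2: "B1$b$b' = 1" .
  have 3: "\<not> scalar_on (J - {a}) B1"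
  proof
    assume "scalar_on (J - {a}) B1"
    then obtain c where "\<forall>i\<in>J - {a}. \<forall>j\<in>J - {a}. B1$i$j = (if i = j then c else 0)"
      unfolding scalar_on_def by blast
    then have "B1$b$b' = 0" using b b' by auto
    then show False using 2 by simp
  qed
  have 4: "\<forall>i. i \<notin> J \<longrightarrow> B1$i$i = B$i$i"
  proof (intro allI impI)
    fix i assume "i \<notin> J"
    then have "i \<noteq> a" "z i = 0" using a b b' by (auto simp: z_def)
    then show "B1$i$i = B$i$i" unfolding B1_def ea_entry[of z a, OF za] by simp
  qed
  have "simi B B1" unfolding B1_def by (rule simi_ea[of z a, OF za])
  then show ?thesis using 1 3 4 by blast
next
  case False
  then have sub: "J - {a} \<subseteq> {b}" by auto
  have cd: "card (J - {a}) \<le> 1" using card_mono[OF _ sub] by simp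
  define al where "al = - B$a$a / B$b$a"
  define z where "z = (\<lambda>k. if k = b then al else 0)"
  have za: "z a = 0" unfolding z_def using b by auto
  define B1 where "B1 = cnj (\<lambda>k. if k = a then 1 else 0) z B"
  have S: "(\<Sum>k\<in>UNIV. z k * B$k$a) = al * B$b$a"
    unfolding z_def using sum_if_l[of b al "\<lambda>k. B$k$a"] by simp
  have "B1$a$a = B$a$a + (\<Sum>k\<in>UNIV. z k * B$k$a)"
    unfolding B1_def ea_entry[of z a, OF za] using za by simp
  also have "\<dots> = 0" unfolding S al_def using b by (simp add: field_simps)
  finally have 1: "B1$a$a = 0" .
  have 4: "\<forall>i. i \<notin> J \<longrightarrow> B1$i$i = B$i$i"
  proof (intro allI impI)
    fix i assume "i \<notin> J"
    then have "i \<noteq> a" "z i = 0" using a b by (auto simp: z_def)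
    then show "B1$i$i = B$i$i" unfolding B1_def ea_entry[of z a, OF za] by simp
  qed
  have "simi B B1" unfolding B1_def by (rule simi_ea[of z a, OF za])
  then show ?thesis using 1 4 cd by auto
qed

lemma FL:
  fixes B :: "'a::field^'n^'n"
  assumes inf: "infinite (UNIV::'a set)"
  shows "(2 \<le> card J \<longrightarrow> \<not> scalar_on J B) \<Longrightarrow> (\<Sum>i\<in>J. B$i$i) = 0 \<Longrightarrow>
    \<exists>B'. simi B B' \<and> (\<forall>i\<in>J. B'$i$i = 0) \<and> (\<forall>i. i \<notin> J \<longrightarrow> B'$i$i = B$i$i)"
proof (induction "card J" arbitrary: J B rule: less_induct)
  case less
  have fin: "finite J" by simp
  show ?case
  proof (cases "card J \<le> 1")
    case True
    then have one: "\<forall>x\<in>J. \<forall>y\<in>J. x = y" using card_le_Suc0_iff_eq[OF fin] by simp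
    have "\<forall>i\<in>J. B$i$i = 0"
    proof
      fix i assume i: "i \<in> J"
      then have "J = {i}" using one by auto
      then show "B$i$i = 0" using less.prems(2) by simp
    qed
    then show ?thesis using simi_refl by blast
  next
    case False
    then have c2: "2 \<le> card J" by simp
    then have ns: "\<not> scalar_on J B" using less.prems(1) by simp
    from c2 have "J \<noteq> {}" by auto
    then obtain a where a: "a \<in> J" by blast
    obtain B0 where B0: "simi B B0" "\<forall>i. i \<notin> J \<longrightarrow> B0$i$i = B$i$i" and
      b: "\<exists>b\<in>J. b \<noteq> a \<and> B0$b$a \<noteq> 0"
      using SL1[OF inf a ns] by blast
    then obtain b where b: "b \<in> J" "b \<noteq> a" "B0$b$a \<noteq> 0" by blast
    obtain B1 where B1: "simi B0 B1" "B1$a$a = 0" "\<forall>i. i \<notin> J \<longrightarrow> B1$i$i = B0$i$i"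
      "2 \<le> card (J - {a}) \<longrightarrow> \<not> scalar_on (J - {a}) B1"
      using SL2[OF a b] by blast
    have sBB1: "simi B B1" using B0(1) B1(1) by (rule simi_trans)
    have tr: "trace B1 = trace B" using simi_trace[OF sBB1] .
    have split: "trace M = (\<Sum>i\<in>J. M$i$i) + (\<Sum>i\<in>-J. M$i$i)" for M :: "'a^'n^'n"
    proof -
      have "UNIV = J \<union> -J" by auto
      then have "trace M = (\<Sum>i\<in>J \<union> -J. M$i$i)" unfolding trace_def by simp
      also have "\<dots> = (\<Sum>i\<in>J. M$i$i) + (\<Sum>i\<in>-J. M$i$i)"
        by (rule sum.union_disjoint) auto
      finally show ?thesis .
    qed
    have "(\<Sum>i\<in>-J. B1$i$i) = (\<Sum>i\<in>-J. B$i$i)"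
      by (rule sum.cong) (use B0(2) B1(3) in auto)
    then have "(\<Sum>i\<in>J. B1$i$i) = (\<Sum>i\<in>J. B$i$i)" using tr split[of B1] split[of B] by simp
    then have "(\<Sum>i\<in>J. B1$i$i) = 0" using less.prems(2) by simp
    moreover have "(\<Sum>i\<in>J. B1$i$i) = B1$a$a + (\<Sum>i\<in>J - {a}. B1$i$i)"
      using sum.remove[OF fin a] by simp
    ultimately have s0: "(\<Sum>i\<in>J - {a}. B1$i$i) = 0" using B1(2) by simp
    have lt: "card (J - {a}) < card J" using a fin c2 by (simp add: card_Diff1_less)
    obtain B2 where B2: "simi B1 B2" "\<forall>i\<in>J - {a}. B2$i$i = 0" "\<forall>i. i \<notin> J - {a} \<longrightarrow> B2$i$i = B1$i$i"
      using less.hyps[OF lt B1(4) s0] by blast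
    have "simi B B2" using sBB1 B2(1) by (rule simi_trans)
    moreover have "\<forall>i\<in>J. B2$i$i = 0"
    proof
      fix i assume "i \<in> J"
      then show "B2$i$i = 0" using B2(2,3) B1(2) by (cases "i = a") auto
    qed
    moreover have "\<forall>i. i \<notin> J \<longrightarrow> B2$i$i = B$i$i" using B2(3) B1(3) B0(2) by auto
    ultimately show ?thesis by blast
  qed
qed

lemma dmat_entry: "dmat d $ i $ j = (if i = j then d i else 0)"
  unfolding dmat_def by simp

lemma DL:
  fixes d :: "'n::finite \<Rightarrow> 'a::field" and f :: "'n \<Rightarrow> int"
  assumes inj: "inj d"
  shows "(\<forall>i j. U$i$j \<noteq> 0 \<longrightarrow> i \<in> R \<and> f i < f j) \<Longrightarrow> simi (dmat d) (dmat d + (U::'a^'n^'n))"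
proof (induction "card R" arbitrary: R U rule: less_induct)
  case less
  have fin: "finite R" by simp
  show ?case
  proof (cases "R = {}")
    case True
    then have "U = 0" using less.prems by (simp add: vec_eq_iff)
    then show ?thesis using simi_refl by simp
  next
    case False
    define m where "m = Max (f ` R)"
    have "m \<in> f ` R" unfolding m_def using False fin by (intro Max_in) auto
    then obtain a where a: "a \<in> R" "f a = m" by blast
    have amax: "\<forall>x\<in>R. f x \<le> f a" using a(2) fin unfolding m_def by auto
    define z where "z = (\<lambda>j. if f a < f j then - U$a$j / (d j - d a) else 0)"
    have za: "z a = 0" unfolding z_def by simp
    define Z where "Z = dmat d + U"
    define U1 where "U1 = (\<chi> i j. if i = a then 0 else U$i$j - U$i$a * z j)"
    have Uaa: "U$a$a = 0" using less.prems by auto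
    have S1: "(\<Sum>k\<in>UNIV. z k * Z$k$j) = z j * d j" for j
    proof -
      have "(\<Sum>k\<in>UNIV. z k * Z$k$j) = (\<Sum>k\<in>UNIV. (if k = j then z j * d j else 0))"
      proof (rule sum.cong)
        fix k assume "k \<in> (UNIV :: 'n set)"
        have "z k \<noteq> 0 \<Longrightarrow> U$k$j = 0" using amax less.prems unfolding z_def
          by (metis not_le)
        then show "z k * Z$k$j = (if k = j then z j * d j else 0)"
          unfolding Z_def by (cases "z k = 0") (auto simp: dmat_entry)
      qed simp
      also have "\<dots> = z j * d j" by simp
      finally show ?thesis .
    qed
    have "cnj (\<lambda>k. if k = a then 1 else 0) z Z = dmat d + U1"
    proof -
      have "(cnj (\<lambda>k. if k = a then 1 else 0) z Z)$i$j = (dmat d + U1)$i$j" for i j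
      proof (cases "i = a")
        case True
        have "(cnj (\<lambda>k. if k = a then 1 else 0) z Z)$i$j = Z$a$j + z j * d j - d a * z j"
          unfolding ea_entry[of z a, OF za] S1 using True za Uaa by (simp add: Z_def dmat_entry)
        also have "\<dots> = (if a = j then d a else 0)"
        proof (cases "f a < f j")
          case True
          then have "j \<noteq> a" by auto
          then have "d j \<noteq> d a" using inj by (auto dest: injD)
          then show ?thesis using True \<open>j \<noteq> a\<close> by (simp add: Z_def dmat_entry z_def field_simps)
        next
          case False
          then have "U$a$j = 0" using less.prems by auto
          then show ?thesis using False by (simp add: Z_def dmat_entry z_def)
        qed
        finally show ?thesis using True by (simp add: U1_def dmat_entry)
      next
        case False
        then show ?thesis unfolding ea_entry[of z a, OF za]
          by (simp add: Z_def U1_def dmat_entry)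
      qed
      then show ?thesis by (simp add: vec_eq_iff)
    qed
    moreover have "simi Z (cnj (\<lambda>k. if k = a then 1 else 0) z Z)" by (rule simi_ea[of z a, OF za])
    moreover have "simi (dmat d) (dmat d + U1)"
    proof (rule less.hyps)
      show "card (R - {a}) < card R" using a fin by (meson card_Diff1_less)
      show "\<forall>i j. U1$i$j \<noteq> 0 \<longrightarrow> i \<in> R - {a} \<and> f i < f j"
      proof (intro allI impI)
        fix i j assume h: "U1$i$j \<noteq> 0"
        then have ia: "i \<noteq> a" unfolding U1_def by auto
        then have "U$i$j \<noteq> 0 \<or> (U$i$a \<noteq> 0 \<and> z j \<noteq> 0)" using h unfolding U1_def by auto
        then show "i \<in> R - {a} \<and> f i < f j"
        proof
          assume "U$i$j \<noteq> 0" then show ?thesis using less.prems ia by auto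
        next
          assume "U$i$a \<noteq> 0 \<and> z j \<noteq> 0"
          then have "i \<in> R" "f i < f a" "f a < f j" using less.prems unfolding z_def by (auto split: if_splits)
          then show ?thesis using ia by auto
        qed
      qed
    qed
    ultimately show ?thesis unfolding Z_def using simi_trans simi_sym by metis
  qed
qed

lemma mat_mul_left_ent: "(mat c ** (M::'a::comm_ring_1^'n^'n))$i$j = c * M$i$j"
proof -
  have "(mat c ** M)$i$j = (\<Sum>k\<in>UNIV. (if k = i then c else 0) * M$k$j)"
    unfolding matrix_matrix_mult_def mat_def by (simp add: eq_commute)
  then show ?thesis by (simp add: sum_if_l)
qed

lemma mat_mul_right_ent: "((M::'a::comm_ring_1^'n^'n) ** mat c)$i$j = M$i$j * c"
proof -
  have "(M ** mat c)$i$j = (\<Sum>k\<in>UNIV. M$i$k * (if k = j then c else 0))"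
    unfolding matrix_matrix_mult_def mat_def by simp
  then show ?thesis by (simp add: sum_if_r)
qed

lemma mat_comm: "mat c ** (M::'a::comm_ring_1^'n^'n) = M ** mat c"
  by (simp add: vec_eq_iff mat_mul_left_ent mat_mul_right_ent mult.commute)

lemma matpow_conj:
  assumes "P ** Q = mat 1" "Q ** P = mat 1"
  shows "matpow (P ** X ** Q) k = P ** matpow (X::'a::comm_ring_1^'n^'n) k ** Q"
proof (induction k)
  case 0
  then show ?case using assms by simp
next
  case (Suc k)
  have "matpow (P ** X ** Q) (Suc k) = (P ** X ** Q) ** (P ** matpow X k ** Q)" using Suc by simp
  also have "\<dots> = P ** X ** (Q ** P) ** matpow X k ** Q" by (simp add: matrix_mul_assoc)
  also have "\<dots> = P ** matpow X (Suc k) ** Q" using assms by (simp add: matrix_mul_assoc)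
  finally show ?case .
qed

lemma sum_conj:
  "finite S \<Longrightarrow> P ** (\<Sum>i\<in>S. M i) ** Q = (\<Sum>i\<in>S. P ** M i ** (Q::'a::comm_ring_1^'n^'n))"
proof (induction S rule: finite_induct)
  case empty
  then show ?case by simp
next
  case (insert x F)
  then show ?case by (simp add: matrix_add_ldistrib matrix_add_rdistrib)
qed

lemma poly_mat_conj:
  assumes "P ** Q = mat 1" "Q ** P = mat 1"
  shows "poly_mat p (P ** X ** Q) = P ** poly_mat p (X::'a::comm_ring_1^'n^'n) ** (Q::'a^'n^'n)"
proof -
  have "P ** poly_mat p X ** Q = (\<Sum>i\<le>degree p. P ** (mat (coeff p i) ** matpow X i) ** Q)"
    unfolding poly_mat_def by (rule sum_conj) simp
  also have "\<dots> = (\<Sum>i\<le>degree p. mat (coeff p i) ** matpow (P ** X ** Q) i)"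
  proof (rule sum.cong)
    fix i
    have "P ** (mat (coeff p i) ** matpow X i) ** Q = (P ** mat (coeff p i)) ** matpow X i ** Q"
      by (simp add: matrix_mul_assoc)
    also have "\<dots> = mat (coeff p i) ** (P ** matpow X i ** Q)"
      by (simp add: matrix_mul_assoc mat_comm)
    finally show "P ** (mat (coeff p i) ** matpow X i) ** Q = mat (coeff p i) ** matpow (P ** X ** Q) i"
      using matpow_conj[OF assms] by simp
  qed simp
  finally show ?thesis unfolding poly_mat_def by simp
qed

lemma dmat_mul: "dmat s ** dmat t = dmat (\<lambda>i. s i * (t i::'a::comm_ring_1))"
proof -
  have "(dmat s ** dmat t)$i$j = dmat (\<lambda>i. s i * t i)$i$j" for i j
  proof -
    have "(dmat s ** dmat t)$i$j = (\<Sum>k\<in>UNIV. (if k = i then s i else 0) * (if k = j then t k else 0))"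
      unfolding matrix_matrix_mult_def dmat_def vec_lambda_beta by (rule sum.cong) auto
    also have "\<dots> = s i * (if i = j then t i else 0)" by (rule sum_if_l)
    finally show ?thesis by (simp add: dmat_entry)
  qed
  then show ?thesis by (simp add: vec_eq_iff)
qed

lemma matpow_dmat: "matpow (dmat t) k = dmat (\<lambda>i. (t i::'a::comm_ring_1) ^ k)"
proof (induction k)
  case 0
  have "mat 1 = dmat (\<lambda>i. 1::'a)" by (simp add: vec_eq_iff mat_def dmat_entry)
  then show ?case by simp
next
  case (Suc k)
  then show ?case by (simp add: dmat_mul)
qed

lemma poly_mat_dmat: "poly_mat p (dmat t) = dmat (\<lambda>i. poly p (t i::'a::comm_ring_1))"
proof -
  have "poly_mat p (dmat t)$i$j = dmat (\<lambda>i. poly p (t i))$i$j" for i j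
  proof -
    have "poly_mat p (dmat t)$i$j = (\<Sum>k\<le>degree p. coeff p k * (if i = j then t i ^ k else 0))"
      unfolding poly_mat_def sum_component matpow_dmat mat_mul_left_ent dmat_entry by simp
    also have "\<dots> = (if i = j then poly p (t i) else 0)"
      by (simp add: poly_altdef)
    finally show ?thesis by (simp add: dmat_entry)
  qed
  then show ?thesis by (simp add: vec_eq_iff)
qed

lemma img_simi:
  assumes "M \<in> poly_commutator_image p" "simi M N"
  shows "N \<in> poly_commutator_image (p::'a::comm_ring_1 poly)"
proof -
  obtain A B where M: "M = poly_mat p (A ** B) - poly_mat p (B ** A)"
    using assms(1) unfolding poly_commutator_image_def by blast
  obtain P Q where PQ: "P ** Q = mat 1" "Q ** P = mat 1" "N = P ** M ** Q"
    using assms(2) unfolding simi_def by blast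
  define A' where "A' = P ** A ** Q"
  define B' where "B' = P ** B ** Q"
  have ab: "A' ** B' = P ** (A ** B) ** Q" unfolding A'_def B'_def
    by (metis PQ(2) matrix_mul_assoc matrix_mul_rid)
  have ba: "B' ** A' = P ** (B ** A) ** Q" unfolding A'_def B'_def
    by (metis PQ(2) matrix_mul_assoc matrix_mul_rid)
  have "N = P ** poly_mat p (A ** B) ** Q - P ** poly_mat p (B ** A) ** Q"
    unfolding PQ(3) M by (simp add: matrix_sub_ldistrib matrix_sub_rdistrib)
  also have "\<dots> = poly_mat p (A' ** B') - poly_mat p (B' ** A')"
    unfolding ab ba poly_mat_conj[OF PQ(1,2)] ..
  finally show ?thesis unfolding poly_commutator_image_def by blast
qed

lemma img_diff:
  assumes "simi (poly_mat p X) Z1" "simi (poly_mat p X) Z2"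
  shows "Z1 - Z2 \<in> poly_commutator_image (p::'a::comm_ring_1 poly)"
proof -
  obtain P Q where PQ: "P ** Q = mat 1" "Q ** P = mat 1" "Z1 = P ** poly_mat p X ** Q"
    using assms(1) unfolding simi_def by blast
  obtain P' Q' where PQ': "P' ** Q' = mat 1" "Q' ** P' = mat 1" "Z2 = P' ** poly_mat p X ** Q'"
    using assms(2) unfolding simi_def by blast
  define A where "A = P ** Q'"
  define B where "B = P' ** X ** Q"
  have "A ** B = P ** (Q' ** P') ** X ** Q" unfolding A_def B_def by (simp add: matrix_mul_assoc)
  then have ab: "A ** B = P ** X ** Q" using PQ' by simp
  have "B ** A = P' ** X ** (Q ** P) ** Q'" unfolding A_def B_def by (simp add: matrix_mul_assoc)
  then have ba: "B ** A = P' ** X ** Q'" using PQ by simp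
  have "Z1 - Z2 = poly_mat p (A ** B) - poly_mat p (B ** A)"
    unfolding ab ba poly_mat_conj[OF PQ(1,2)] poly_mat_conj[OF PQ'(1,2)] PQ(3) PQ'(3) ..
  then show ?thesis unfolding poly_commutator_image_def by blast
qed

lemma scalar_central:
  assumes "scalar_on UNIV (C::'a::comm_ring_1^'n^'n)"
  shows "central_mat C"
proof -
  obtain c where c: "\<forall>i j. C$i$j = (if i = j then c else 0)" using assms unfolding scalar_on_def by blast
  then have "C = mat c" by (simp add: vec_eq_iff mat_def)
  then show ?thesis unfolding central_mat_def by (simp add: mat_comm)
qed

lemma central_scalar:
  assumes "central_mat (C::'a::comm_ring_1^'n^'n)"
  shows "C = mat (C$a$a)"
proof -
  have "C$k$i = (if k = i then C$a$a else 0)" for k i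
  proof -
    define E :: "'a^'n^'n" where "E = (\<chi> x y. if x = i \<and> y = a then 1 else 0)"
    have "(C ** E)$k$a = (\<Sum>m\<in>UNIV. C$k$m * (if m = i then 1 else 0))"
      unfolding matrix_matrix_mult_def E_def by simp
    also have "\<dots> = C$k$i" by (simp add: sum_if_r)
    finally have 1: "(C ** E)$k$a = C$k$i" .
    have "(E ** C)$k$a = (\<Sum>m\<in>UNIV. (if k = i then (if m = a then 1 else 0) else 0) * C$m$a)"
      unfolding matrix_matrix_mult_def E_def vec_lambda_beta by (rule sum.cong) auto
    also have "\<dots> = (if k = i then C$a$a else 0)"
      by (cases "k = i") (simp_all add: sum_if_l)
    finally have 2: "(E ** C)$k$a = (if k = i then C$a$a else 0)" .
    have "C ** E = E ** C" using assms unfolding central_mat_def by blast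
    then have "(C ** E)$k$a = (E ** C)$k$a" by simp
    then show ?thesis using 1 2 by simp
  qed
  note h = this
  define c where "c = C$a$a"
  have h2: "C$k$i = (if k = i then c else 0)" for k i using h unfolding c_def by blast
  have "C = mat c" unfolding vec_eq_iff mat_def using h2 by simp
  then show ?thesis unfolding c_def .
qed

lemma infinite_range_poly:
  fixes p :: "'a::field poly"
  assumes inf: "infinite (UNIV::'a set)" and deg: "degree p > 0"
  shows "infinite (range (poly p))"
proof
  assume fin: "finite (range (poly p))"
  have "\<forall>y. finite {x. poly p x = y}"
  proof
    fix y
    have "p - [:y:] \<noteq> 0"
    proof
      assume "p - [:y:] = 0"
      then have "p = [:y:]" by simp
      then show False using deg by simp
    qed
    then have "finite {x. poly (p - [:y:]) x = 0}" by (rule poly_roots_finite)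
    then show "finite {x. poly p x = y}" by simp
  qed
  moreover have "UNIV = (\<Union>y\<in>range (poly p). {x. poly p x = y})" by auto
  ultimately have "finite (UNIV::'a set)" using fin by (metis finite_UN_I)
  then show False using inf by simp
qed

lemma matpow_swap: "matpow ((A::'a::comm_ring_1^'n^'n) ** B) (Suc k) = A ** matpow (B ** A) k ** B"
proof (induction k)
  case 0
  then show ?case by simp
next
  case (Suc k)
  have "matpow (A ** B) (Suc (Suc k)) = (A ** B) ** matpow (A ** B) (Suc k)"
    by (simp only: matpow.simps)
  also have "\<dots> = (A ** B) ** (A ** matpow (B ** A) k ** B)"
    by (simp only: Suc.IH)
  also have "\<dots> = A ** ((B ** A) ** matpow (B ** A) k) ** B" by (simp add: matrix_mul_assoc)
  finally show ?case by simp
qed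

lemma trace_matpow_swap: "trace (matpow ((A::'a::comm_ring_1^'n^'n) ** B) k) = trace (matpow (B ** A) k)"
proof (cases k)
  case 0
  then show ?thesis by simp
next
  case (Suc m)
  have "trace (matpow (A ** B) k) = trace (A ** matpow (B ** A) m ** B)" by (simp only: Suc matpow_swap)
  also have "\<dots> = trace (B ** (A ** matpow (B ** A) m))" using trace_mul_sym[of "A ** matpow (B ** A) m" B] .
  also have "\<dots> = trace (matpow (B ** A) k)" using Suc by (simp add: matrix_mul_assoc)
  finally show ?thesis .
qed

lemma trace_sum: "finite S \<Longrightarrow> trace (\<Sum>i\<in>S. M i) = (\<Sum>i\<in>S. trace (M i::'a::comm_ring_1^'n^'n))"
proof (induction S rule: finite_induct)
  case empty
  then show ?case by (metis mat_0 sum.empty trace_0)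
next
  case (insert x F)
  then show ?case by (simp add: trace_add)
qed

lemma trace_matc: "trace (mat c ** (M::'a::comm_ring_1^'n^'n)) = c * trace M"
  by (simp add: trace_def mat_mul_left_ent sum_distrib_left)

lemma trace_poly_swap: "trace (poly_mat p ((A::'a::comm_ring_1^'n^'n) ** B)) = trace (poly_mat p (B ** A))"
  unfolding poly_mat_def by (simp add: trace_sum trace_matc trace_matpow_swap)

lemma part1:
  fixes p :: "'a::field poly" and C :: "'a^'n^'n"
  assumes inf: "infinite (UNIV :: 'a set)" and deg: "degree p > 0"
    and nc: "\<not> central_mat C" and tr: "trace C = 0"
  shows "C \<in> poly_commutator_image p"
proof -
  have ns: "\<not> scalar_on UNIV C" using nc scalar_central by blast
  obtain C' where C': "simi C C'" "\<forall>i\<in>UNIV. C'$i$i = 0"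
    using FL[OF inf, of UNIV C] ns tr unfolding trace_def by blast
  obtain f0 :: "'n \<Rightarrow> nat" and n where "f0 ` UNIV = {i. i < n}" "inj_on f0 UNIV"
    using finite_imp_inj_to_nat_seg[of "UNIV::'n set"] by auto
  then have f0: "inj f0" by simp
  define f where "f = (\<lambda>i. int (f0 i))"
  have finj: "f i = f j \<Longrightarrow> i = j" for i j using f0 unfolding f_def by (auto dest: injD)
  obtain g :: "nat \<Rightarrow> 'a" where g: "inj g" "range g \<subseteq> range (poly p)"
    using infinite_countable_subset[OF infinite_range_poly[OF inf deg]] by blast
  define t where "t = (\<lambda>i. SOME x. poly p x = g (f0 i))"
  have pt: "poly p (t i) = g (f0 i)" for i
  proof -
    have "g (f0 i) \<in> range (poly p)" using g(2) by auto
    then have "\<exists>x. poly p x = g (f0 i)" by (metis imageE)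
    then show ?thesis unfolding t_def by (rule someI_ex)
  qed
  define d where "d = (\<lambda>i. poly p (t i))"
  have dinj: "inj d" unfolding d_def pt using g(1) f0 by (simp add: inj_def)
  define U :: "'a^'n^'n" where "U = (\<chi> i j. if f i < f j then C'$i$j else 0)"
  define L :: "'a^'n^'n" where "L = (\<chi> i j. if f j < f i then - C'$i$j else 0)"
  have s1: "simi (dmat d) (dmat d + U)"
    by (rule DL[OF dinj, of U UNIV f]) (auto simp: U_def)
  have s2: "simi (dmat d) (dmat d + L)"
    by (rule DL[OF dinj, of L UNIV "\<lambda>i. - f i"]) (auto simp: L_def)
  have eq: "C' = (dmat d + U) - (dmat d + L)"
  proof -
    have "C'$i$j = ((dmat d + U) - (dmat d + L))$i$j" for i j
    proof (cases "i = j")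
      case True
      then show ?thesis using C'(2) by (simp add: U_def L_def)
    next
      case False
      then have "f i \<noteq> f j" using finj by auto
      then show ?thesis by (auto simp: U_def L_def)
    qed
    then show ?thesis by (simp add: vec_eq_iff)
  qed
  have D: "dmat d = poly_mat p (dmat t)" unfolding d_def poly_mat_dmat ..
  have "C' \<in> poly_commutator_image p"
  proof -
    have a1: "simi (poly_mat p (dmat t)) (dmat d + U)" using s1 D by simp
    have a2: "simi (poly_mat p (dmat t)) (dmat d + L)" using s2 D by simp
    show ?thesis unfolding eq by (rule img_diff[OF a1 a2])
  qed
  then show ?thesis using img_simi simi_sym[OF C'(1)] by blast
qed

theorem corollary3p5:
  fixes p :: "'a::field poly"
  assumes "infinite (UNIV :: 'a set)"
    and "CARD('n::finite) > 1"
    and "degree p > 0"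
  shows "(\<forall>A :: 'a^'n^'n. \<not> central_mat A \<and> trace A = 0 \<longrightarrow> A \<in> poly_commutator_image p)
         \<and> (CHAR('a) = 0 \<longrightarrow>
              (poly_commutator_image p :: ('a^'n^'n) set) = {A. trace A = 0})"
proof (intro conjI impI allI)
  fix A :: "'a^'n^'n"
  assume "\<not> central_mat A \<and> trace A = 0"
  then show "A \<in> poly_commutator_image p" using part1[OF assms(1) assms(3)] by blast
next
  assume ch: "CHAR('a) = 0"
  show "(poly_commutator_image p :: ('a^'n^'n) set) = {A. trace A = 0}"
  proof
    show "(poly_commutator_image p :: ('a^'n^'n) set) \<subseteq> {A. trace A = 0}"
      unfolding poly_commutator_image_def by (auto simp: trace_sub trace_poly_swap)
  next
    show "{A. trace A = 0} \<subseteq> (poly_commutator_image p :: ('a^'n^'n) set)"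
    proof
      fix A :: "'a^'n^'n" assume "A \<in> {A. trace A = 0}"
      then have tr: "trace A = 0" by simp
      show "A \<in> poly_commutator_image p"
      proof (cases "central_mat A")
        case False
        then show ?thesis using part1[OF assms(1) assms(3)] tr by blast
      next
        case True
        obtain a :: 'n where True by blast
        have Am: "A = mat (A$a$a)" using central_scalar[OF True] .
        have "trace A = of_nat CARD('n) * A$a$a"
          by (subst Am) (simp add: trace_def mat_def)
        moreover have "(of_nat CARD('n) :: 'a) \<noteq> 0"
          using ch by (simp add: of_nat_eq_0_iff_char_dvd)
        ultimately have "A$a$a = 0" using tr by simp
        then have "A = 0" using Am by simp
        moreover have "(0::'a^'n^'n) = poly_mat p (0 ** 0) - poly_mat p (0 ** 0)" by simp
        ultimately show ?thesis unfolding poly_commutator_image_def by blast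
      qed
    qed
  qed
qed

end
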